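(* There is a universal constant $C$ such that for all $\rho_0,\rho_1,\rho_2>0$, all $\Theta_{01},\Theta_{02},\Theta_{12}\in[0,\pi/2]$, and $j\in\{1,2\}$, $$\frac{\partial\Phi_0(\rho_0,\rho_1,\rho_2;\Theta_{01},\Theta_{02},\Theta_{12})}{\partial(\log\rho_j)}\le C\,\Phi_0(\rho_0,\rho_1,\rho_2;\Theta_{01},\Theta_{02},\Theta_{12}).$$
   Context: Given $\rho_0,\rho_1,\rho_2>0$ and $\Theta_{ij}\in[0,\pi/2]$ for $(i,j)\in\{(0,1),(0,2),(1,2)\}$, there is a configuration of three closed disks $D_0,D_1,D_2$ in $\mathbb{C}$, unique up to euclidean isometries, with euclidean radii $\rho(D_k)=\rho_k$ and with the dihedral angle of $D_i$ and $D_j$ equal to $\Theta_{ij}$ (the dihedral angle of two intersecting disks $D,D'$ being the angle in $[0,\pi)$ between the clockwise tangent of $\partial D$ and the counterclockwise tangent of $\partial D'$ at a point of $\partial D\cap\partial D'$). Let $A_k$ be the center of $D_k$, and let $\Phi_k(\rho_0,\rho_1,\rho_2;\Theta_{01},\Theta_{02},\Theta_{12})$ be the angle of the triangle $A_0A_1A_2$ at $A_k$. *)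

theory Defs
  imports "HOL-Analysis.Analysis"
begin

text \<open>Distance between the centers of two closed disks of radii ri, rj whose
dihedral angle (in the paper's convention: 0 = externally tangent,
pi/2 = orthogonal) is Th.\<close>
definition center_dist :: "real \<Rightarrow> real \<Rightarrow> real \<Rightarrow> real" where
  "center_dist ri rj Th = sqrt (ri\<^sup>2 + rj\<^sup>2 + 2 * ri * rj * cos Th)"

definition tri_angle :: "real \<Rightarrow> real \<Rightarrow> real \<Rightarrow> real" where
  "tri_angle a b c = arccos ((a\<^sup>2 + b\<^sup>2 - c\<^sup>2) / (2 * a * b))"

definition Phi0 :: "real \<Rightarrow> real \<Rightarrow> real \<Rightarrow> real \<Rightarrow> real \<Rightarrow> real \<Rightarrow> real" where
  "Phi0 r0 r1 r2 T01 T02 T12 =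
     tri_angle (center_dist r0 r1 T01) (center_dist r0 r2 T02) (center_dist r1 r2 T12)"

end

theory Submission
  imports Defs
begin

lemma poly_key:
  fixes z x y k1 k2 k3 :: real
  assumes "z>0" "x>0" "y>0" "0\<le>k1" "k1\<le>1" "0\<le>k2" "k2\<le>1" "0\<le>k3" "k3\<le>1"
  shows "z*x*(z+y)*(z*x*(1-k1^2) + y*k2*(x+z*k1) + y*k3*(z+x*k1))
    \<le> 8*(z+x)*(z^2*y^2*(1-k2^2) + z^2*x^2*(1-k1^2) + x^2*y^2*(1-k3^2) + 2*x^2*y*z*k2 + 2*x*y^2*z*k1
       + 2*x*y*z^2*k1*k2 + 2*x*y*z^2*k3 + 2*x^2*y*z*k1*k3 + 2*x*y^2*z*k2*k3)"
proof -
  have q1: "0 \<le> 1-k1^2" "0 \<le> 1-k2^2" "0 \<le> 1-k3^2" using assms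
    by (simp_all add: abs_le_iff power_le_one)
  have "0 \<le> 16*z^3*y^2*(1-k2^2)
     + z^3*x^2*(1-k1^2)*(13 + k3)
     + z*x^2*y^2*(1-k3)*(13 + 16*k3 + k1^2 + 2*(1-k2))
     + 30*x^2*y*z^2*k2
     + 2*x*y^2*z^2*k1*(16 - k2)
     + 30*x*y*z^3*k1*k2
     + 30*x*y*z^3*k3
     + 30*x^2*y*z^2*k1*k3
     + 30*x*y^2*z^2*k2*k3
     + 2*x*z^2*y^2*(1-k2)*(8*(1+k2) - k3)
     + 16*x^3*z^2*(1-k1^2)
     + 16*x^3*y^2*(1-k3^2)
     + 32*x^3*y*z*k2
     + 2*x^2*y^2*z*k1*(16-k3)
     + 32*x^2*y*z^2*k1*k2
     + 2*x^2*y*z^2*k3*(15+k1^2)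
     + 32*x^3*y*z*k1*k3
     + 30*x^2*y^2*z*k2*k3
     + (1-k1^2)*(1-k3)*z*x^2*(z-y)^2"
    using assms q1
    by (intro add_nonneg_nonneg mult_nonneg_nonneg) (auto simp: power2_eq_square)
  also have "\<dots> = 2*(8*(z+x)*(z^2*y^2*(1-k2^2) + z^2*x^2*(1-k1^2) + x^2*y^2*(1-k3^2) + 2*x^2*y*z*k2 + 2*x*y^2*z*k1
       + 2*x*y*z^2*k1*k2 + 2*x*y*z^2*k3 + 2*x^2*y*z*k1*k3 + 2*x*y^2*z*k2*k3) -
     z*x*(z+y)*(z*x*(1-k1^2) + y*k2*(x+z*k1) + y*k3*(z+x*k1)))"
    by (simp add: algebra_simps power2_eq_square power3_eq_cube)
  finally show ?thesis by simp
qed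

lemma aux_lin: fixes S P Q :: real shows "2*P \<le> S \<Longrightarrow> 0 \<le> Q \<Longrightarrow> 0 \<le> S \<Longrightarrow> 64*S + 128*P \<le> 144*S + 288*Q"
  by linarith

lemma main1:
  fixes r0 r1 r2 T01 T02 T12 :: real
  assumes r0: "r0 > 0" and r1: "r1 > 0" and r2: "r2 > 0"
    and T: "T01 \<in> {0..pi/2}" "T02 \<in> {0..pi/2}" "T12 \<in> {0..pi/2}"
  shows "deriv (\<lambda>u. Phi0 r0 (exp u) r2 T01 T02 T12) (ln r1) \<le> 12 * Phi0 r0 r1 r2 T01 T02 T12"
proof -
  define k1 where "k1 = cos T01"
  define k2 where "k2 = cos T02"
  define k3 where "k3 = cos T12"
  have k: "0 \<le> k1" "k1 \<le> 1" "0 \<le> k2" "k2 \<le> 1" "0 \<le> k3" "k3 \<le> 1"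
    using T by (auto simp: k1_def k2_def k3_def intro!: cos_ge_zero)
  define Xf where "Xf = (\<lambda>x::real. r0^2 + x^2 + 2*r0*x*k1)"
  define Zf where "Zf = (\<lambda>x::real. x^2 + r2^2 + 2*x*r2*k3)"
  define Y where "Y = r0^2 + r2^2 + 2*r0*r2*k2"
  define b where "b = sqrt Y"
  define Q where "Q = (\<lambda>x. (Xf x + Y - Zf x) / (2 * sqrt (Xf x) * b))"
  have Xpos: "Xf x > 0" if "x > 0" for x
    using r0 k that unfolding Xf_def by (intro add_pos_nonneg) auto
  have Zpos: "Zf x \<ge> 0" if "x > 0" for x
    using r2 k that unfolding Zf_def by (intro add_nonneg_nonneg) auto
  have Ypos: "Y > 0" using r0 r2 k unfolding Y_def by (intro add_pos_nonneg) auto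
  have bpos: "b > 0" using Ypos by (simp add: b_def)
  have b2: "b^2 = Y" using Ypos by (simp add: b_def)
  have Phi_eq: "Phi0 r0 x r2 T01 T02 T12 = arccos (Q x)" if "x > 0" for x
  proof -
    have "center_dist r0 x T01 = sqrt (Xf x)" by (simp add: center_dist_def Xf_def k1_def)
    moreover have "center_dist x r2 T12 = sqrt (Zf x)" by (simp add: center_dist_def Zf_def k3_def)
    moreover have "center_dist r0 r2 T02 = b" by (simp add: center_dist_def Y_def b_def k2_def)
    ultimately show ?thesis
      using Xpos[OF that] Zpos[OF that] b2
      by (simp add: Phi0_def tri_angle_def Q_def mult.commute mult.left_commute)
  qed
  have fun_eq: "(\<lambda>u. Phi0 r0 (exp u) r2 T01 T02 T12) = (\<lambda>u. arccos (Q (exp u)))"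
    by (rule ext) (simp add: Phi_eq)
  define a where "a = sqrt (Xf r1)"
  have apos: "a > 0" using Xpos[OF r1] by (simp add: a_def)
  have a2: "a^2 = Xf r1" using Xpos[OF r1] by (simp add: a_def)
  define N where "N = Xf r1 + Y - Zf r1"
  define g where "g = Q r1"
  have g_eq: "g = N / (2*a*b)" by (simp add: g_def Q_def N_def a_def)
  define Xd where "Xd = 2*r1 + 2*r0*k1"
  define Zd where "Zd = 2*r1 + 2*r2*k3"
  have dX: "(Xf has_real_derivative Xd) (at r1)"
    unfolding Xf_def Xd_def by (auto intro!: derivative_eq_intros)
  have dZ: "(Zf has_real_derivative Zd) (at r1)"
    unfolding Zf_def Zd_def by (auto intro!: derivative_eq_intros)
  have dA: "((\<lambda>x. sqrt (Xf x)) has_real_derivative (inverse a / 2 * Xd)) (at r1)"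
    unfolding a_def by (rule DERIV_chain2[OF DERIV_real_sqrt[OF Xpos[OF r1]] dX])
  have dN: "((\<lambda>x. Xf x + Y - Zf x) has_real_derivative (Xd - Zd)) (at r1)"
    using DERIV_diff[OF DERIV_add[OF dX DERIV_const[of Y]] dZ] by simp
  have dDen: "((\<lambda>x. 2 * sqrt (Xf x) * b) has_real_derivative (2 * (inverse a / 2 * Xd) * b)) (at r1)"
    using DERIV_cmult_right[OF DERIV_cmult[OF dA, of 2], of b] by simp
  define Q' where "Q' = ((Xd - Zd) * (2*a*b) - N * (2 * (inverse a / 2 * Xd) * b)) / ((2*a*b) * (2*a*b))"
  have dQ: "(Q has_real_derivative Q') (at r1)"
    unfolding Q_def Q'_def
    using DERIV_divide[OF dN dDen] apos bpos by (simp add: a_def N_def)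
  have dF: "((\<lambda>u. Q (exp u)) has_real_derivative Q' * r1) (at (ln r1))"
  proof -
    have "DERIV Q (exp (ln r1)) :> Q'" using dQ r1 by simp
    from DERIV_chain2[OF this DERIV_exp] show ?thesis using r1 by simp
  qed

  define E where "E = r0^2*r2^2*(1-k2^2) + r0^2*r1^2*(1-k1^2) + r1^2*r2^2*(1-k3^2) + 2*r1^2*r2*r0*k2 + 2*r1*r2^2*r0*k1
       + 2*r1*r2*r0^2*k1*k2 + 2*r1*r2*r0^2*k3 + 2*r1^2*r2*r0*k1*k3 + 2*r1*r2^2*r0*k2*k3"
  define M where "M = r0*r1*(1-k1^2) + r2*k2*(r1+r0*k1) + r2*k3*(r0+r1*k1)"
  have key: "r0*r1*(r0+r2)*M \<le> 8*(r0+r1)*E"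
    unfolding M_def E_def using poly_key[OF r0 r1 r2 k] .
  have E_id: "4 * Xf r1 * Y - N^2 = 4*E"
    unfolding E_def N_def Xf_def Y_def Zf_def by (simp add: algebra_simps power2_eq_square)
  have id2: "(Xd - Zd)*2*Xf r1 - N*Xd = -4*r0*M"
    unfolding M_def N_def Xf_def Y_def Zf_def Xd_def Zd_def by (simp add: algebra_simps power2_eq_square)
  have Q'_eq1: "Q' = ((Xd - Zd)*2*a^2 - N*Xd)/(4*a^3*b)"
    unfolding Q'_def using apos bpos by (simp add: field_simps power2_eq_square power3_eq_cube)
  have Q'_eq: "Q' = -(r0*M)/(b*a^3)"
    unfolding Q'_eq1 a2 id2 using apos bpos by (simp add: field_simps)
  have q1: "0 \<le> 1-k1^2" "0 \<le> 1-k2^2" "0 \<le> 1-k3^2" using k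
    by (simp_all add: abs_le_iff power_le_one)
  have Mnn: "M \<ge> 0" unfolding M_def using k q1 r0 r1 r2
    by (intro add_nonneg_nonneg mult_nonneg_nonneg) auto
  have E0: "0 < r1^2*r2^2*(1-k3^2) + 2*r1*r2*r0^2*k3"
  proof (cases "k3 = 1")
    case True then show ?thesis using r0 r1 r2 by simp
  next
    case False
    then have "k3^2 < 1" using k by (simp add: abs_square_less_1)
    then have "0 < r1^2*r2^2*(1-k3^2)" using r1 r2 by simp
    moreover have "0 \<le> 2*r1*r2*r0^2*k3" using r0 r1 r2 k by simp
    ultimately show ?thesis by linarith
  qed
  have E1: "0 \<le> r0^2*r2^2*(1-k2^2) + r0^2*r1^2*(1-k1^2) + 2*r1^2*r2*r0*k2 + 2*r1*r2^2*r0*k1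
       + 2*r1*r2*r0^2*k1*k2 + 2*r1^2*r2*r0*k1*k3 + 2*r1*r2^2*r0*k2*k3"
    using k q1 r0 r1 r2 by (intro add_nonneg_nonneg mult_nonneg_nonneg) auto
  have Epos: "E > 0" using E0 E1 unfolding E_def by linarith
  have g2: "1 - g^2 = E / (a^2 * b^2)"
  proof -
    have "1 - g^2 = (4 * a^2 * b^2 - N^2) / (4 * a^2 * b^2)"
      unfolding g_eq using apos bpos by (simp add: field_simps power2_eq_square)
    also have "\<dots> = E / (a^2 * b^2)" unfolding a2 b2 E_id by simp
    finally show ?thesis .
  qed
  have s2pos: "1 - g^2 > 0" unfolding g2 using Epos apos bpos by simp
  then have gb: "-1 < g" "g < 1" using abs_square_less_1[of g] by auto
  define s where "s = sqrt (1 - g^2)"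
  have spos: "s > 0" using s2pos by (simp add: s_def)
  have s2: "s^2 = E / (a^2 * b^2)" using s2pos g2 by (simp add: s_def)
  have dArc: "DERIV arccos (Q (exp (ln r1))) :> inverse (- s)"
    using DERIV_arccos[OF gb] r1 by (simp add: g_def s_def)
  have dPhi: "((\<lambda>u. arccos (Q (exp u))) has_real_derivative inverse (- s) * (Q' * r1)) (at (ln r1))"
    by (rule DERIV_chain2[OF dArc dF])
  have deq: "deriv (\<lambda>u. Phi0 r0 (exp u) r2 T01 T02 T12) (ln r1) = inverse (- s) * (Q' * r1)"
    unfolding fun_eq by (rule DERIV_imp_deriv[OF dPhi])
  have arc: "s \<le> arccos g"
  proof -
    have "sin (arccos g) = s" using gb by (simp add: sin_arccos s_def)
    moreover have "arccos g \<ge> 0" using gb by (simp add: arccos_lbound)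
    ultimately show ?thesis using sin_x_le_x by metis
  qed
  have Phi1: "Phi0 r0 r1 r2 T01 T02 T12 = arccos g" using Phi_eq[OF r1] by (simp add: g_def)
  have ble: "b \<le> r0 + r2"
  proof -
    have "Y \<le> (r0+r2)^2" unfolding Y_def using k r0 r2 by (simp add: power2_eq_square algebra_simps mult_left_le)
    then have "sqrt Y \<le> sqrt ((r0+r2)^2)" by (rule real_sqrt_le_mono)
    then show ?thesis unfolding b_def using r0 r2 by simp
  qed
  have ale: "8*(r0+r1) \<le> 12*a"
  proof -
    have h1: "0 \<le> (r0-r1)^2" by simp
    have h2: "0 \<le> r0*r1*k1" using r0 r1 k by simp
    have h3: "2*(r0*r1) \<le> r0^2 + r1^2" using h1 by (simp add: power2_eq_square algebra_simps)
    have "(8*(r0+r1))^2 = 64*(r0^2+r1^2) + 128*(r0*r1)" by (simp add: power2_eq_square algebra_simps)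
    also have "\<dots> \<le> 144*(r0^2 + r1^2) + 288*(r0*r1*k1)"
      using h3 h2 by (intro aux_lin) auto
    also have "\<dots> = 144*(r0^2 + r1^2 + 2*r0*r1*k1)" by (simp add: algebra_simps)
    also have "\<dots> = (12*a)^2" unfolding power_mult_distrib a2 Xf_def by simp
    finally have "(8*(r0+r1))^2 \<le> (12*a)^2" .
    then show ?thesis by (rule power2_le_imp_le) (use apos in simp)
  qed
  have main: "r0*r1*M*b \<le> 12*E*a"
  proof -
    have "r0*r1*M*b \<le> r0*r1*M*(r0+r2)" using ble Mnn r0 r1 by (intro mult_left_mono) auto
    also have "\<dots> \<le> 8*(r0+r1)*E" using key by (simp add: algebra_simps)
    also have "\<dots> \<le> 12*a*E" using ale Epos by (intro mult_right_mono) auto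
    finally show ?thesis by (simp add: algebra_simps)
  qed
  have main': "r0*r1*M \<le> 12*E*a/b" using main bpos by (simp add: pos_le_divide_eq)
  have "inverse (- s) * (Q' * r1) = (r0*r1*M) / (b*a^3 * s)"
    unfolding Q'_eq by (simp add: divide_simps)
  also have "\<dots> \<le> (12*E*a/b) / (b*a^3 * s)"
    using apos bpos spos by (intro divide_right_mono[OF main']) simp
  also have "\<dots> = 12 * (E/(a^2*b^2)) / s"
    using apos bpos by (simp add: field_simps power2_eq_square power3_eq_cube)
  also have "\<dots> = 12 * s" unfolding s2[symmetric] using spos by (simp add: power2_eq_square)
  also have "\<dots> \<le> 12 * arccos g" using arc by simp
  finally show ?thesis unfolding deq Phi1 .
qed

lemma Phi0_swap: "Phi0 r0 r1 r2 T01 T02 T12 = Phi0 r0 r2 r1 T02 T01 T12"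
  unfolding Phi0_def tri_angle_def center_dist_def by (simp add: ac_simps)

theorem lemma3p3:
  shows "\<exists>C::real. \<forall>r0 r1 r2 T01 T02 T12 (j::nat).
    r0 > 0 \<longrightarrow> r1 > 0 \<longrightarrow> r2 > 0 \<longrightarrow>
    T01 \<in> {0..pi/2} \<longrightarrow> T02 \<in> {0..pi/2} \<longrightarrow> T12 \<in> {0..pi/2} \<longrightarrow>
    j \<in> {1,2} \<longrightarrow>
    deriv (\<lambda>u. Phi0 r0 (if j = 1 then exp u else r1) (if j = 2 then exp u else r2)
                     T01 T02 T12)
          (ln (if j = 1 then r1 else r2))
      \<le> C * Phi0 r0 r1 r2 T01 T02 T12"
proof (intro exI[of _ 12] allI impI)
  fix r0 r1 r2 T01 T02 T12 :: real and j :: nat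
  assume r0: "r0 > 0" and r1: "r1 > 0" and r2: "r2 > 0"
    and T: "T01 \<in> {0..pi/2}" "T02 \<in> {0..pi/2}" "T12 \<in> {0..pi/2}" and j: "j \<in> {1,2}"
  show "deriv (\<lambda>u. Phi0 r0 (if j = 1 then exp u else r1) (if j = 2 then exp u else r2)
                     T01 T02 T12)
          (ln (if j = 1 then r1 else r2))
      \<le> 12 * Phi0 r0 r1 r2 T01 T02 T12"
  proof (cases "j = 1")
    case True
    then show ?thesis using main1[OF r0 r1 r2 T] by simp
  next
    case False
    then have j2: "j = 2" using j by auto
    have "(\<lambda>u. Phi0 r0 r1 (exp u) T01 T02 T12) = (\<lambda>u. Phi0 r0 (exp u) r1 T02 T01 T12)"
      by (rule ext) (rule Phi0_swap)
    moreover have "Phi0 r0 r1 r2 T01 T02 T12 = Phi0 r0 r2 r1 T02 T01 T12" by (rule Phi0_swap)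
    ultimately show ?thesis using main1[OF r0 r2 r1 T(2) T(1) T(3)] j2 by simp
  qed
qed

end
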